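(* For $n\ge 3$, the commutator subgroup $[B_n,B_n]$ is densely ordered by the (restriction of the) Dehornoy ordering; i.e. it has no least positive element, equivalently for any $f<g$ in $[B_n,B_n]$ there is $h\in[B_n,B_n]$ with $f<h<g$.
   Context: $B_n$ is the Artin braid group with generators $\sigma_1,\dots,\sigma_{n-1}$. A word in the generators is $i$-positive if it contains only $\sigma_1,\dots,\sigma_i$ and their inverses, $\sigma_i$ occurs, and every occurrence of $\sigma_i$ has positive exponent; a braid is $i$-positive if some representative word is. The Dehornoy ordering is the left-invariant total order on $B_n$ whose positive cone consists of all braids that are $i$-positive for some $i$. *)

theory Defs
  imports Main
begin

text \<open>Braid words: a letter (i, True) stands for sigma_i, (i, False) for sigma_i inverse.
  The braid group B_n is the group presented by generators sigma_1..sigma_(n-1) and the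
  Artin relations; we represent braids by words and equality in B_n by the congruence
  braid_eq n generated by free cancellation and the braid relations.\<close>

type_synonym letter = "nat \<times> bool"
type_synonym bword = "letter list"

definition valid_word :: "nat \<Rightarrow> bword \<Rightarrow> bool" where
  "valid_word n w \<longleftrightarrow> (\<forall>(i, e) \<in> set w. 1 \<le> i \<and> i < n)"

definition inv_word :: "bword \<Rightarrow> bword" where
  "inv_word w = rev (map (\<lambda>(i, e). (i, \<not> e)) w)"

inductive basic_rel :: "nat \<Rightarrow> bword \<Rightarrow> bword \<Rightarrow> bool" for n where
  cancel: "1 \<le> i \<Longrightarrow> i < n \<Longrightarrow> basic_rel n [(i, e), (i, \<not> e)] []"
| far: "1 \<le> i \<Longrightarrow> i < n \<Longrightarrow> 1 \<le> j \<Longrightarrow> j < n \<Longrightarrow> i + 2 \<le> j \<or> j + 2 \<le> i \<Longrightarrow>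
        basic_rel n [(i, True), (j, True)] [(j, True), (i, True)]"
| near: "1 \<le> i \<Longrightarrow> i < n \<Longrightarrow> 1 \<le> j \<Longrightarrow> j < n \<Longrightarrow> i = j + 1 \<or> j = i + 1 \<Longrightarrow>
        basic_rel n [(i, True), (j, True), (i, True)] [(j, True), (i, True), (j, True)]"

inductive braid_eq :: "nat \<Rightarrow> bword \<Rightarrow> bword \<Rightarrow> bool" for n where
  refl: "valid_word n w \<Longrightarrow> braid_eq n w w"
| step: "valid_word n u \<Longrightarrow> valid_word n v \<Longrightarrow> basic_rel n l r \<Longrightarrow>
         braid_eq n (u @ l @ v) (u @ r @ v)"
| sym: "braid_eq n w w' \<Longrightarrow> braid_eq n w' w"
| trans: "braid_eq n w w' \<Longrightarrow> braid_eq n w' w'' \<Longrightarrow> braid_eq n w w''"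

definition i_positive_word :: "nat \<Rightarrow> bword \<Rightarrow> bool" where
  "i_positive_word i w \<longleftrightarrow>
     (\<forall>(j, e) \<in> set w. 1 \<le> j \<and> j \<le> i) \<and> (i, True) \<in> set w \<and> (i, False) \<notin> set w"

definition dehornoy_positive :: "nat \<Rightarrow> bword \<Rightarrow> bool" where
  "dehornoy_positive n w \<longleftrightarrow> (\<exists>i w'. 1 \<le> i \<and> braid_eq n w w' \<and> i_positive_word i w')"

definition dehornoy_less :: "nat \<Rightarrow> bword \<Rightarrow> bword \<Rightarrow> bool" where
  "dehornoy_less n f g \<longleftrightarrow> dehornoy_positive n (inv_word f @ g)"

definition commutator_word :: "bword \<Rightarrow> bword \<Rightarrow> bword" where
  "commutator_word a b = a @ b @ inv_word a @ inv_word b"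

text \<open>Membership in the commutator subgroup [B_n, B_n]: equal in B_n to a finite product
  of commutators (inverses of commutators are commutators).\<close>
definition in_commutator_subgroup :: "nat \<Rightarrow> bword \<Rightarrow> bool" where
  "in_commutator_subgroup n w \<longleftrightarrow> valid_word n w \<and>
     (\<exists>ps. (\<forall>(a, b) \<in> set ps. valid_word n a \<and> valid_word n b) \<and>
           braid_eq n w (concat (map (\<lambda>(a, b). commutator_word a b) ps)))"

end

theory Submission
  imports Defs
begin

lemma valid_append[simp]: "valid_word n (a @ b) \<longleftrightarrow> valid_word n a \<and> valid_word n b"
  by (auto simp: valid_word_def)

lemma valid_Cons[simp]: "valid_word n ((i,e) # w) \<longleftrightarrow> 1 \<le> i \<and> i < n \<and> valid_word n w"
  by (auto simp: valid_word_def)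

lemma valid_Nil[simp]: "valid_word n []"
  by (auto simp: valid_word_def)

lemma inv_Nil[simp]: "inv_word [] = []"
  by (simp add: inv_word_def)

lemma inv_Cons[simp]: "inv_word ((i,e) # w) = inv_word w @ [(i, \<not> e)]"
  by (simp add: inv_word_def)

lemma inv_append[simp]: "inv_word (a @ b) = inv_word b @ inv_word a"
  by (simp add: inv_word_def)

lemma inv_inv[simp]: "inv_word (inv_word w) = w"
  by (induction w) (auto simp: inv_word_def)

lemma valid_inv[simp]: "valid_word n (inv_word w) = valid_word n w"
  by (induction w) auto

lemma basic_rel_valid: "basic_rel n l r \<Longrightarrow> valid_word n l \<and> valid_word n r"
  by (induction rule: basic_rel.induct) auto

lemma be_valid: "braid_eq n a b \<Longrightarrow> valid_word n a \<and> valid_word n b"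
  by (induction rule: braid_eq.induct) (auto dest: basic_rel_valid)

lemma be_appR: "braid_eq n a b \<Longrightarrow> valid_word n c \<Longrightarrow> braid_eq n (a @ c) (b @ c)"
proof (induction rule: braid_eq.induct)
  case (refl w) then show ?case by (auto intro: braid_eq.refl)
next
  case (step u v l r)
  then show ?case using braid_eq.step[of n u "v @ c" l r] by auto
next
  case (sym w w') then show ?case by (auto intro: braid_eq.sym)
next
  case (trans w w' w'') then show ?case by (auto intro: braid_eq.trans)
qed

lemma be_appL: "braid_eq n a b \<Longrightarrow> valid_word n c \<Longrightarrow> braid_eq n (c @ a) (c @ b)"
proof (induction rule: braid_eq.induct)
  case (refl w) then show ?case by (auto intro: braid_eq.refl)
next
  case (step u v l r)
  then show ?case using braid_eq.step[of n "c @ u" v l r] by auto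
next
  case (sym w w') then show ?case by (auto intro: braid_eq.sym)
next
  case (trans w w' w'') then show ?case by (auto intro: braid_eq.trans)
qed

lemma be_cong: "braid_eq n a a' \<Longrightarrow> braid_eq n b b' \<Longrightarrow> braid_eq n (a @ b) (a' @ b')"
  by (meson be_appL be_appR be_valid braid_eq.trans)

lemma be_cancel: "valid_word n u \<Longrightarrow> braid_eq n (u @ inv_word u) []"
proof (induction u)
  case Nil then show ?case by (auto intro: braid_eq.refl)
next
  case (Cons x u)
  obtain i e where x: "x = (i,e)" by (cases x)
  have v: "1 \<le> i" "i < n" "valid_word n u" using Cons.prems x by auto
  have "braid_eq n ([x] @ (u @ inv_word u) @ [(i, \<not> e)]) ([x] @ [] @ [(i, \<not> e)])"
    using Cons v x by (intro be_cong be_appR) (auto intro: braid_eq.refl)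
  moreover have "braid_eq n ([] @ [(i,e), (i, \<not> e)] @ []) ([] @ [] @ [])"
    by (rule braid_eq.step) (auto intro: basic_rel.cancel v)
  ultimately show ?case using x by (auto intro: braid_eq.trans)
qed

lemma be_inv_cancel: "valid_word n u \<Longrightarrow> braid_eq n (inv_word u @ u) []"
  using be_cancel[of n "inv_word u"] by simp

lemma be_ins: "valid_word n x \<Longrightarrow> valid_word n y \<Longrightarrow> valid_word n u \<Longrightarrow>
  braid_eq n (x @ y) (x @ inv_word u @ u @ y)"
proof -
  assume a: "valid_word n x" "valid_word n y" "valid_word n u"
  have "braid_eq n (x @ (inv_word u @ u) @ y) (x @ [] @ y)"
    using a by (intro be_appL be_appR be_inv_cancel) auto
  then show ?thesis by (auto intro: braid_eq.sym)
qed

lemma conj_comm: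
  assumes "valid_word n u" "valid_word n a" "valid_word n b"
  shows "braid_eq n (u @ commutator_word a b @ inv_word u)
    (commutator_word (u @ a @ inv_word u) (u @ b @ inv_word u))"
proof -
  let ?ia = "inv_word a" and ?ib = "inv_word b" and ?iu = "inv_word u"
  have 1: "braid_eq n ((u @ a) @ (b @ ?ia @ ?ib @ ?iu)) ((u @ a) @ ?iu @ u @ (b @ ?ia @ ?ib @ ?iu))"
    using assms by (intro be_ins) auto
  have 2: "braid_eq n ((u @ a @ ?iu @ u @ b) @ (?ia @ ?ib @ ?iu))
      ((u @ a @ ?iu @ u @ b) @ ?iu @ u @ (?ia @ ?ib @ ?iu))"
    using assms by (intro be_ins) auto
  have 3: "braid_eq n ((u @ a @ ?iu @ u @ b @ ?iu @ u @ ?ia) @ (?ib @ ?iu))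
      ((u @ a @ ?iu @ u @ b @ ?iu @ u @ ?ia) @ ?iu @ u @ (?ib @ ?iu))"
    using assms by (intro be_ins) auto
  from 1 2 3 show ?thesis
    unfolding commutator_word_def by simp (meson braid_eq.trans)
qed

lemma R2: assumes "n \<ge> 3"
  shows "braid_eq n [(2,True),(1,True),(2,False)] [(1,False),(2,True),(1,True)]"
proof -
  have a: "braid_eq n ([(1,False),(2,True),(1,True)] @ [(2,True),(2,False)] @ [])
        ([(1,False),(2,True),(1,True)] @ [] @ [])"
    using assms by (intro braid_eq.step) (auto intro: basic_rel.cancel[of 2 n True, simplified])
  have b: "braid_eq n ([(1,False)] @ [(2,True),(1,True),(2,True)] @ [(2,False)])
        ([(1,False)] @ [(1,True),(2,True),(1,True)] @ [(2,False)])"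
    using assms by (intro braid_eq.step) (auto intro: basic_rel.near)
  have c: "braid_eq n ([] @ [(1,False),(1,True)] @ [(2,True),(1,True),(2,False)])
        ([] @ [] @ [(2,True),(1,True),(2,False)])"
    using assms by (intro braid_eq.step) (auto intro: basic_rel.cancel[of 1 n False, simplified])
  from a b c show ?thesis by simp (meson braid_eq.sym braid_eq.trans)
qed

lemma R1: assumes "n \<ge> 3"
  shows "braid_eq n [(1,True),(2,False)] (commutator_word [(1,True)] [(1,True),(2,True)])"
proof -
  have a: "braid_eq n ([(2,False)] @ ([(1,True),(2,True),(1,True)] @ inv_word [(1,True),(2,True),(1,True)]))
     ([(2,False)] @ [])"
    using assms by (intro be_appL be_cancel) auto
  have b: "braid_eq n ([(2,False)] @ [(1,True),(2,True),(1,True)] @ [(1,False),(2,False),(1,False)])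
        ([(2,False)] @ [(2,True),(1,True),(2,True)] @ [(1,False),(2,False),(1,False)])"
    using assms by (intro braid_eq.step) (auto intro: basic_rel.near)
  have c: "braid_eq n ([] @ [(2,False),(2,True)] @ [(1,True),(2,True),(1,False),(2,False),(1,False)])
        ([] @ [] @ [(1,True),(2,True),(1,False),(2,False),(1,False)])"
    using assms by (intro braid_eq.step) (auto intro: basic_rel.cancel[of 2 n False, simplified])
  have d: "braid_eq n [(2,False)] [(1,True),(2,True),(1,False),(2,False),(1,False)]"
    using a b c by simp (meson braid_eq.sym braid_eq.trans)
  have "braid_eq n ([(1,True)] @ [(2,False)]) ([(1,True)] @ [(1,True),(2,True),(1,False),(2,False),(1,False)])"
    using d assms by (intro be_appL) auto
  then show ?thesis by (simp add: commutator_word_def)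
qed

definition es :: "bword \<Rightarrow> int" where
  "es w = sum_list (map (\<lambda>(i,e). if e then 1 else -1) w)"

lemma es_Nil[simp]: "es [] = 0" by (simp add: es_def)
lemma es_Cons[simp]: "es ((i,e) # w) = (if e then 1 else -1) + es w" by (simp add: es_def)
lemma es_append[simp]: "es (a @ b) = es a + es b" by (simp add: es_def)
lemma es_inv[simp]: "es (inv_word w) = - es w" by (induction w) auto

lemma es_rel: "basic_rel n l r \<Longrightarrow> es l = es r"
  by (induction rule: basic_rel.induct) auto

lemma es_be: "braid_eq n a b \<Longrightarrow> es a = es b"
  by (induction rule: braid_eq.induct) (auto dest: es_rel)

lemma es_comm_prod: "es (concat (map (\<lambda>(a, b). commutator_word a b) ps)) = 0"
  by (induction ps) (auto simp: commutator_word_def)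

lemma es_pos: "\<forall>x\<in>set w. x = (1,True) \<Longrightarrow> w \<noteq> [] \<Longrightarrow> es w > 0"
proof (induction w)
  case Nil then show ?case by simp
next
  case (Cons x w) then show ?case by (cases "w = []") auto
qed

lemma main_aux:
  assumes n: "n \<ge> 3" and g: "in_commutator_subgroup n g" and f: "valid_word n f"
    and w: "braid_eq n (inv_word f @ g) w'"
    and q: "braid_eq n (w' @ c) q" "i_positive_word j q" "1 \<le> j"
    and c: "c = inv_word s @ [(1,True),(2,False)] @ s"
    and s: "\<forall>x\<in>set s. fst x = 1"
  shows "\<exists>h. in_commutator_subgroup n h \<and> dehornoy_less n f h \<and> dehornoy_less n h g"
proof -
  have vs: "valid_word n s" using s n unfolding valid_word_def by auto
  have vc: "valid_word n c" using vs n c by auto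
  have vg: "valid_word n g" using g unfolding in_commutator_subgroup_def by auto
  obtain ps where ps: "\<forall>(a, b) \<in> set ps. valid_word n a \<and> valid_word n b"
    "braid_eq n g (concat (map (\<lambda>(a, b). commutator_word a b) ps))"
    using g unfolding in_commutator_subgroup_def by auto
  define h where "h = g @ c"
  have "braid_eq n ((inv_word f @ g) @ c) (w' @ c)" using w vc by (rule be_appR)
  then have "braid_eq n (inv_word f @ h) q" using q(1) unfolding h_def
    by (auto intro: braid_eq.trans)
  then have l1: "dehornoy_less n f h" using q unfolding dehornoy_less_def dehornoy_positive_def
    by blast
  have "braid_eq n (inv_word c @ (inv_word g @ g)) (inv_word c @ [])"
    using vg vc by (intro be_appL be_inv_cancel) auto
  moreover have ic: "inv_word c = inv_word s @ [(2,True),(1,False)] @ s" using c by simp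
  moreover have "i_positive_word 2 (inv_word c)"
    unfolding ic i_positive_word_def using s
    by (auto simp: inv_word_def)
  ultimately have l2: "dehornoy_less n h g" unfolding dehornoy_less_def dehornoy_positive_def h_def
    by (metis append_Nil2 append_assoc inv_append one_le_numeral)
  define a where "a = inv_word s @ [(1,True)] @ s"
  define b where "b = inv_word s @ [(1,True),(2,True)] @ s"
  have "braid_eq n (inv_word s @ [(1,True),(2,False)] @ s)
      (inv_word s @ commutator_word [(1,True)] [(1,True),(2,True)] @ s)"
    using R1[OF n] vs by (intro be_appL be_appR) auto
  moreover have "braid_eq n (inv_word s @ commutator_word [(1,True)] [(1,True),(2,True)] @ inv_word (inv_word s))
     (commutator_word a b)"
    unfolding a_def b_def using conj_comm[of n "inv_word s" "[(1,True)]" "[(1,True),(2,True)]"] vs n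
    by simp
  ultimately have cab: "braid_eq n c (commutator_word a b)" using c by (auto intro: braid_eq.trans)
  have "braid_eq n h (concat (map (\<lambda>(a, b). commutator_word a b) ps) @ commutator_word a b)"
    unfolding h_def using ps(2) cab by (rule be_cong)
  moreover have "valid_word n a" "valid_word n b" using vs n unfolding a_def b_def by auto
  ultimately have "in_commutator_subgroup n h"
    unfolding in_commutator_subgroup_def using ps(1) vg vc h_def
    by (intro conjI exI[of _ "ps @ [(a,b)]"]) auto
  then show ?thesis using l1 l2 by blast
qed


theorem proposition3p1:
  fixes n :: nat and f g :: bword
  assumes "n \<ge> 3"
    and "in_commutator_subgroup n f" and "in_commutator_subgroup n g"
    and "dehornoy_less n f g"
  shows "\<exists>h. in_commutator_subgroup n h \<and> dehornoy_less n f h \<and> dehornoy_less n h g"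
proof -
  obtain i w' where i: "1 \<le> i" and w: "braid_eq n (inv_word f @ g) w'" and ip: "i_positive_word i w'"
    using assms(4) unfolding dehornoy_less_def dehornoy_positive_def by blast
  have vf: "valid_word n f" using assms(2) unfolding in_commutator_subgroup_def by auto
  have vw: "valid_word n w'" using be_valid[OF w] by auto
  have esf: "es f = 0" "es g = 0" using assms(2,3) es_be es_comm_prod
    unfolding in_commutator_subgroup_def by metis+
  have esw: "es w' = 0" using es_be[OF w] esf by simp
  consider "i = 1" | "i = 2" | "i \<ge> 3" using i by linarith
  then show ?thesis
  proof cases
    case 1
    have "\<forall>x\<in>set w'. x = (1,True)"
    proof
      fix x assume x: "x \<in> set w'"
      obtain j e where xe: "x = (j,e)" by (cases x)
      have "1 \<le> j" "j \<le> 1" "(1,False) \<notin> set w'" using ip 1 x xe unfolding i_positive_word_def by auto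
      then show "x = (1,True)" using x xe by (cases e) auto
    qed
    moreover have "w' \<noteq> []" using ip unfolding i_positive_word_def by auto
    ultimately show ?thesis using es_pos esw by fastforce
  next
    case 3
    have "braid_eq n (w' @ [(1,True),(2,False)]) (w' @ [(1,True),(2,False)])"
      using vw assms(1) by (intro braid_eq.refl) auto
    moreover have "i_positive_word i (w' @ [(1,True),(2,False)])"
      using ip 3 unfolding i_positive_word_def by auto
    ultimately show ?thesis using main_aux[OF assms(1) assms(3) vf w, of "[(1,True),(2,False)]" _ i "[]"] i
      by simp
  next
    case 2
    have "(2,True) \<in> set w'" using ip 2 unfolding i_positive_word_def by auto
    then obtain w'' s where ws: "w' = w'' @ (2,True) # s" "(2,True) \<notin> set s"
      by (meson split_list_last)
    have s1: "\<forall>x\<in>set s. fst x = 1"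
    proof
      fix x assume x: "x \<in> set s"
      obtain j e where xe: "x = (j,e)" by (cases x)
      have "1 \<le> j" "j \<le> 2" "(2,False) \<notin> set s" using ip 2 x xe ws unfolding i_positive_word_def by auto
      moreover have "j \<noteq> 2" using ws(2) x xe calculation(3) by (cases e) auto
      ultimately show "fst x = 1" using xe by simp
    qed
    have vs: "valid_word n s" "valid_word n w''" using vw ws by auto
    define c where "c = inv_word s @ [(1,True),(2,False)] @ s"
    define q where "q = w'' @ [(1,False),(2,True),(1,True)] @ s"
    have "braid_eq n ((w'' @ [(2,True)]) @ (s @ inv_word s) @ ([(1,True),(2,False)] @ s))
        ((w'' @ [(2,True)]) @ [] @ ([(1,True),(2,False)] @ s))"
      using vs assms(1) by (intro be_appL be_appR be_cancel) auto
    moreover have "braid_eq n (w'' @ [(2,True),(1,True),(2,False)] @ s) q"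
      unfolding q_def using vs R2[OF assms(1)] by (intro be_appL be_appR) auto
    ultimately have "braid_eq n (w' @ c) q" unfolding c_def ws(1)
      by simp (meson braid_eq.trans)
    moreover have "i_positive_word 2 q" unfolding q_def i_positive_word_def using ip 2 ws s1
      unfolding i_positive_word_def by auto
    ultimately show ?thesis using main_aux[OF assms(1) assms(3) vf w _ _ _ c_def s1] by auto
  qed
qed

end
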